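(* Let $\mathcal{H}$ be a complex Hilbert space of finite dimension $n\ge2$, $m\ge 2$, let $\sigma$ be a self-adjoint operator on $\mathcal{H}$ with spectral decomposition $\sigma=\sum_j s_j\Pi_j$ (the $s_j$ pairwise distinct, $\Pi_j$ the orthogonal spectral projectors), and define $\Pi_{\rm sym}=\sum_j\Pi_j^{\otimes m}$. A density operator $\rho$ on $\mathcal{H}^{\otimes m}$ is in single $\sigma$-measurement consensus ($\sigma$SMC) if and only if $\mathrm{Tr}(\Pi_{\rm sym}\rho)=1$, which is equivalent to $\Pi_{\rm sym}\rho\Pi_{\rm sym}=\Pi_{\rm sym}\rho=\rho$.
   Context: For $X$ an operator on $\mathcal{H}$, $X^{(i)}=I^{\otimes(i-1)}\otimes X\otimes I^{\otimes(m-i)}$. $\rho$ is in $\sigma$SMC if $\mathrm{Tr}(\Pi_j^{(k)}\Pi_j^{(\ell)}\rho)=\mathrm{Tr}(\Pi_j^{(\ell)}\rho)$ for all $k,\ell\in\{1,\dots,m\}$ and all $j$. *)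

theory Defs
  imports "Jordan_Normal_Form.Matrix"
begin

text \<open>Operators on H^{(tensor m)} = C^(n^m) are (n^m) x (n^m) complex matrices, where a basis
 index a < n^m encodes the tensor basis vector e_{d_1} (x) ... (x) e_{d_m} with
 d_k = digit n m a k (base-n digits, factor 1 most significant).\<close>

definition mtrace :: "complex mat \<Rightarrow> complex" where
  "mtrace A = (\<Sum>i<dim_row A. A $$ (i, i))"

definition adj :: "complex mat \<Rightarrow> complex mat" where
  "adj A = mat (dim_col A) (dim_row A) (\<lambda>(i, j). cnj (A $$ (j, i)))"

definition self_adjoint :: "nat \<Rightarrow> complex mat \<Rightarrow> bool" where
  "self_adjoint d A \<longleftrightarrow> A \<in> carrier_mat d d \<and> adj A = A"

definition orth_projector :: "nat \<Rightarrow> complex mat \<Rightarrow> bool" where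
  "orth_projector d P \<longleftrightarrow> P \<in> carrier_mat d d \<and> P * P = P \<and> adj P = P"

definition cinner :: "complex vec \<Rightarrow> complex vec \<Rightarrow> complex" where
  "cinner v w = (\<Sum>i<dim_vec v. cnj (v $ i) * w $ i)"

definition positive_semidef :: "nat \<Rightarrow> complex mat \<Rightarrow> bool" where
  "positive_semidef d A \<longleftrightarrow> A \<in> carrier_mat d d \<and>
     (\<forall>v \<in> carrier_vec d. Im (cinner v (A *\<^sub>v v)) = 0 \<and> 0 \<le> Re (cinner v (A *\<^sub>v v)))"

definition density_op :: "nat \<Rightarrow> complex mat \<Rightarrow> bool" where
  "density_op d \<rho> \<longleftrightarrow> positive_semidef d \<rho> \<and> mtrace \<rho> = 1"

definition digit :: "nat \<Rightarrow> nat \<Rightarrow> nat \<Rightarrow> nat \<Rightarrow> nat" where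
  "digit n m a k = (a div n ^ (m - k)) mod n"

text \<open>X^{(i)} = I^{(tensor i-1)} (x) X (x) I^{(tensor m-i)}.\<close>
definition embed_op :: "nat \<Rightarrow> nat \<Rightarrow> nat \<Rightarrow> complex mat \<Rightarrow> complex mat" where
  "embed_op n m i X = mat (n ^ m) (n ^ m) (\<lambda>(a, b).
      X $$ (digit n m a i, digit n m b i) *
      (if \<forall>k \<in> {1..m} - {i}. digit n m a k = digit n m b k then 1 else 0))"

definition tensor_pow :: "nat \<Rightarrow> nat \<Rightarrow> complex mat \<Rightarrow> complex mat" where
  "tensor_pow n m X = mat (n ^ m) (n ^ m) (\<lambda>(a, b).
      \<Prod>k \<in> {1..m}. X $$ (digit n m a k, digit n m b k))"

definition mat_sum :: "nat \<Rightarrow> ('j \<Rightarrow> complex mat) \<Rightarrow> 'j set \<Rightarrow> complex mat" where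
  "mat_sum d f J = mat d d (\<lambda>(a, b). \<Sum>j \<in> J. f j $$ (a, b))"

definition spectral_decomp :: "nat \<Rightarrow> complex mat \<Rightarrow> 'j set \<Rightarrow> ('j \<Rightarrow> real) \<Rightarrow> ('j \<Rightarrow> complex mat) \<Rightarrow> bool" where
  "spectral_decomp n \<sigma> J s P \<longleftrightarrow> finite J \<and> inj_on s J \<and>
     (\<forall>j \<in> J. orth_projector n (P j) \<and> P j \<noteq> 0\<^sub>m n n) \<and>
     (\<forall>j \<in> J. \<forall>k \<in> J. j \<noteq> k \<longrightarrow> P j * P k = 0\<^sub>m n n) \<and>
     mat_sum n P J = 1\<^sub>m n \<and>
     \<sigma> = mat_sum n (\<lambda>j. complex_of_real (s j) \<cdot>\<^sub>m P j) J"

definition Pi_sym :: "nat \<Rightarrow> nat \<Rightarrow> 'j set \<Rightarrow> ('j \<Rightarrow> complex mat) \<Rightarrow> complex mat" where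
  "Pi_sym n m J P = mat_sum (n ^ m) (\<lambda>j. tensor_pow n m (P j)) J"

definition sigma_SMC :: "nat \<Rightarrow> nat \<Rightarrow> 'j set \<Rightarrow> ('j \<Rightarrow> complex mat) \<Rightarrow> complex mat \<Rightarrow> bool" where
  "sigma_SMC n m J P \<rho> \<longleftrightarrow>
     (\<forall>j \<in> J. \<forall>k \<in> {1..m}. \<forall>l \<in> {1..m}.
        mtrace (embed_op n m k (P j) * embed_op n m l (P j) * \<rho>) = mtrace (embed_op n m l (P j) * \<rho>))"

end

theory Submission
  imports Defs "HOL-Library.FuncSet"
begin


lemma digit_lt: "n > 0 \<Longrightarrow> digit n m a k < n"
  unfolding digit_def by simp

lemma mod_pow_eq:
  assumes "\<And>i. i < r \<Longrightarrow> (a div n ^ i) mod n = (b div n ^ i) mod (n::nat)"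
  shows "a mod n ^ r = b mod n ^ r"
  using assms
proof (induction r)
  case 0 then show ?case by simp
next
  case (Suc r)
  have "a mod n ^ Suc r = n ^ r * (a div n ^ r mod n) + a mod n ^ r"
    by (metis power_Suc2 mod_mult2_eq)
  moreover have "b mod n ^ Suc r = n ^ r * (b div n ^ r mod n) + b mod n ^ r"
    by (metis power_Suc2 mod_mult2_eq)
  ultimately show ?case using Suc by simp
qed

lemma digits_inj:
  assumes "a < n ^ m" "b < n ^ m" "\<forall>k\<in>{1..m}. digit n m a k = digit n m b k"
  shows "a = b"
proof -
  have "a mod n ^ m = b mod n ^ m"
  proof (rule mod_pow_eq)
    fix i assume i: "i < m"
    then have "m - i \<in> {1..m}" by auto
    with assms(3) have "digit n m a (m - i) = digit n m b (m - i)" by blast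
    moreover have "m - (m - i) = i" using i by simp
    ultimately show "a div n ^ i mod n = b div n ^ i mod n" unfolding digit_def by simp
  qed
  then show ?thesis using assms by simp
qed

definition dvec :: "nat \<Rightarrow> nat \<Rightarrow> nat \<Rightarrow> nat \<Rightarrow> nat" where
  "dvec n m a = restrict (digit n m a) {1..m}"

lemma dvec_bij:
  assumes "n > 0"
  shows "bij_betw (dvec n m) {..<n ^ m} (PiE {1..m} (\<lambda>_. {..<n}))"
proof -
  have inj: "inj_on (dvec n m) {..<n ^ m}"
  proof (rule inj_onI)
    fix a b assume "a \<in> {..<n ^ m}" "b \<in> {..<n ^ m}" "dvec n m a = dvec n m b"
    then show "a = b"
      by (intro digits_inj[of a n m b]) (auto simp: dvec_def restrict_def fun_eq_iff split: if_splits)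
  qed
  have sub: "dvec n m ` {..<n ^ m} \<subseteq> PiE {1..m} (\<lambda>_. {..<n})"
    using assms by (auto simp: dvec_def digit_lt)
  have "card (dvec n m ` {..<n ^ m}) = n ^ m" using card_image[OF inj] by simp
  moreover have "card (PiE {1..m} (\<lambda>_. {..<n})) = n ^ m"
    by (simp add: card_PiE)
  ultimately have "dvec n m ` {..<n ^ m} = PiE {1..m} (\<lambda>_. {..<n})"
    using sub by (intro card_subset_eq) (auto intro: finite_PiE)
  then show ?thesis using inj by (simp add: bij_betw_def)
qed

definition tens :: "nat \<Rightarrow> nat \<Rightarrow> (nat \<Rightarrow> complex mat) \<Rightarrow> complex mat" where
  "tens n m X = mat (n ^ m) (n ^ m) (\<lambda>(a, b). \<Prod>k \<in> {1..m}. X k $$ (digit n m a k, digit n m b k))"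

lemma tens_carrier[simp]: "tens n m X \<in> carrier_mat (n^m) (n^m)"
  by (simp add: tens_def)

lemma tens_dims[simp]: "dim_row (tens n m X) = n^m" "dim_col (tens n m X) = n^m"
  by (simp_all add: tens_def)

lemma tens_index: "a < n^m \<Longrightarrow> b < n^m \<Longrightarrow>
   tens n m X $$ (a,b) = (\<Prod>k \<in> {1..m}. X k $$ (digit n m a k, digit n m b k))"
  by (simp add: tens_def)

lemma tens_cong: "(\<And>k. k \<in> {1..m} \<Longrightarrow> X k = Y k) \<Longrightarrow> tens n m X = tens n m Y"
  unfolding tens_def by (intro eq_matI) auto

lemma tens_mult:
  assumes n: "n > 0" and X: "\<And>k. k \<in> {1..m} \<Longrightarrow> X k \<in> carrier_mat n n"
    and Y: "\<And>k. k \<in> {1..m} \<Longrightarrow> Y k \<in> carrier_mat n n"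
  shows "tens n m X * tens n m Y = tens n m (\<lambda>k. X k * Y k)"
proof (rule eq_matI)
  fix a c assume a: "a < dim_row (tens n m (\<lambda>k. X k * Y k))" and c: "c < dim_col (tens n m (\<lambda>k. X k * Y k))"
  then have a': "a < n^m" and c': "c < n^m" by auto
  define g where "g = (\<lambda>d. \<Prod>k\<in>{1..m}. X k $$ (digit n m a k, d k) * Y k $$ (d k, digit n m c k))"
  have "(tens n m X * tens n m Y) $$ (a, c) = (\<Sum>b<n^m. tens n m X $$ (a,b) * tens n m Y $$ (b,c))"
    using a' c' by (simp add: index_mult_mat scalar_prod_def lessThan_atLeast0)
  also have "\<dots> = (\<Sum>b<n^m. g (dvec n m b))"
    using a' c' by (intro sum.cong refl) (simp add: tens_index g_def dvec_def prod.distrib[symmetric])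
  also have "\<dots> = (\<Sum>d\<in>PiE {1..m} (\<lambda>_. {..<n}). g d)"
    by (rule sum.reindex_bij_betw[OF dvec_bij[OF n]])
  also have "\<dots> = (\<Prod>k\<in>{1..m}. \<Sum>x<n. X k $$ (digit n m a k, x) * Y k $$ (x, digit n m c k))"
    unfolding g_def by (rule prod_sum_PiE[symmetric]) auto
  also have "\<dots> = (\<Prod>k\<in>{1..m}. (X k * Y k) $$ (digit n m a k, digit n m c k))"
  proof (intro prod.cong refl)
    fix k assume k: "k \<in> {1..m}"
    show "(\<Sum>x<n. X k $$ (digit n m a k, x) * Y k $$ (x, digit n m c k)) = (X k * Y k) $$ (digit n m a k, digit n m c k)"
      using X[OF k] Y[OF k] digit_lt[OF n]
      by (simp add: index_mult_mat scalar_prod_def lessThan_atLeast0)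
  qed
  also have "\<dots> = tens n m (\<lambda>k. X k * Y k) $$ (a, c)" using a' c' by (simp add: tens_index)
  finally show "(tens n m X * tens n m Y) $$ (a, c) = tens n m (\<lambda>k. X k * Y k) $$ (a, c)" .
qed auto

lemma adj_carrier[simp]: "dim_row (adj A) = dim_col A" "dim_col (adj A) = dim_row A"
  by (simp_all add: adj_def)

lemma adj_index: "i < dim_col A \<Longrightarrow> j < dim_row A \<Longrightarrow> adj A $$ (i,j) = cnj (A $$ (j,i))"
  by (simp add: adj_def)

lemma tens_adj:
  assumes n: "n > 0" and X: "\<And>k. k \<in> {1..m} \<Longrightarrow> X k \<in> carrier_mat n n"
  shows "adj (tens n m X) = tens n m (\<lambda>k. adj (X k))"
proof (rule eq_matI)
  fix a b assume "a < dim_row (tens n m (\<lambda>k. adj (X k)))" "b < dim_col (tens n m (\<lambda>k. adj (X k)))"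
  then have a: "a < n^m" and b: "b < n^m" by auto
  have "adj (tens n m X) $$ (a,b) = (\<Prod>k\<in>{1..m}. cnj (X k $$ (digit n m b k, digit n m a k)))"
    using a b by (simp add: adj_index tens_index)
  also have "\<dots> = tens n m (\<lambda>k. adj (X k)) $$ (a,b)"
    unfolding tens_index[OF a b]
  proof (intro prod.cong refl)
    fix k assume k: "k \<in> {1..m}"
    from X[OF k] have "dim_row (X k) = n" "dim_col (X k) = n" by auto
    then show "cnj (X k $$ (digit n m b k, digit n m a k)) = adj (X k) $$ (digit n m a k, digit n m b k)"
      using digit_lt[OF n] by (simp add: adj_index)
  qed
  finally show "adj (tens n m X) $$ (a,b) = tens n m (\<lambda>k. adj (X k)) $$ (a,b)" .
qed auto

lemma tens_one:
  assumes n: "n > 0"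
  shows "tens n m (\<lambda>_. 1\<^sub>m n) = 1\<^sub>m (n^m)"
proof (rule eq_matI)
  fix a b assume "a < dim_row (1\<^sub>m (n^m) :: complex mat)" "b < dim_col (1\<^sub>m (n^m) :: complex mat)"
  then have a: "a < n^m" and b: "b < n^m" by auto
  have "tens n m (\<lambda>_. 1\<^sub>m n) $$ (a,b) = (\<Prod>k\<in>{1..m}. (if digit n m a k = digit n m b k then 1 else 0))"
    using a b digit_lt[OF n] by (auto simp: tens_index intro!: prod.cong)
  also have "\<dots> = (if a = b then 1 else 0)"
  proof (cases "a = b")
    case True then show ?thesis by simp
  next
    case False
    then obtain k where "k \<in> {1..m}" "digit n m a k \<noteq> digit n m b k"
      using digits_inj[OF a b] by blast
    then have "(\<Prod>k\<in>{1..m}. (if digit n m a k = digit n m b k then 1 else 0::complex)) = 0"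
      by (intro prod_zero) auto
    then show ?thesis using False by simp
  qed
  finally show "tens n m (\<lambda>_. 1\<^sub>m n) $$ (a,b) = 1\<^sub>m (n^m) $$ (a,b)" using a b by simp
qed auto

lemma tens_zero:
  assumes n: "n > 0" and k: "k \<in> {1..m}" and Xk: "X k = 0\<^sub>m n n"
  shows "tens n m X = 0\<^sub>m (n^m) (n^m)"
proof (rule eq_matI)
  fix a b assume "a < dim_row (0\<^sub>m (n^m) (n^m) :: complex mat)" "b < dim_col (0\<^sub>m (n^m) (n^m) :: complex mat)"
  then have a: "a < n^m" and b: "b < n^m" by auto
  show "tens n m X $$ (a,b) = 0\<^sub>m (n^m) (n^m) $$ (a,b)"
    using a b k Xk digit_lt[OF n] by (auto simp: tens_index intro!: prod_zero bexI[of _ k])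
qed auto

lemma prod_upd_split:
  fixes k m :: nat
  assumes k: "k \<in> {1..m}"
  shows "(\<Prod>i\<in>{1..m}. (X(k := C)) i $$ (f i, g i)) = C $$ (f k, g k) * (\<Prod>i\<in>{1..m}-{k}. X i $$ (f i, g i))"
proof -
  have fin: "finite {1..m}" by simp
  have "(\<Prod>i\<in>{1..m}. (X(k := C)) i $$ (f i, g i))
      = (X(k := C)) k $$ (f k, g k) * (\<Prod>i\<in>{1..m}-{k}. (X(k := C)) i $$ (f i, g i))"
    by (rule prod.remove[OF fin k])
  also have "(\<Prod>i\<in>{1..m}-{k}. (X(k := C)) i $$ (f i, g i)) = (\<Prod>i\<in>{1..m}-{k}. X i $$ (f i, g i))"
    by (intro prod.cong) auto
  finally show ?thesis by simp
qed

lemma tens_diff: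
  assumes n: "n > 0" and k: "k \<in> {1..m}" and A: "A \<in> carrier_mat n n" and B: "B \<in> carrier_mat n n"
  shows "tens n m (X(k := A)) - tens n m (X(k := B)) = tens n m (X(k := A - B))"
proof (rule eq_matI)
  fix a b assume "a < dim_row (tens n m (X(k := A - B)))" "b < dim_col (tens n m (X(k := A - B)))"
  then have a: "a < n^m" and b: "b < n^m" by auto
  note dl = digit_lt[OF n]
  have "(tens n m (X(k := A)) - tens n m (X(k := B))) $$ (a,b) = tens n m (X(k := A)) $$ (a,b) - tens n m (X(k := B)) $$ (a,b)"
    using a b by simp
  also have "\<dots> = (A $$ (digit n m a k, digit n m b k) - B $$ (digit n m a k, digit n m b k)) * (\<Prod>i\<in>{1..m}-{k}. X i $$ (digit n m a i, digit n m b i))"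
    unfolding tens_index[OF a b] prod_upd_split[OF k] by (simp add: algebra_simps)
  also have "\<dots> = tens n m (X(k := A - B)) $$ (a,b)"
    unfolding tens_index[OF a b] prod_upd_split[OF k] using A B dl by simp
  finally show "(tens n m (X(k := A)) - tens n m (X(k := B))) $$ (a,b) = tens n m (X(k := A - B)) $$ (a,b)" .
qed auto

lemma embed_tens:
  assumes k: "k \<in> {1..m}"
  shows "embed_op n m k X = tens n m (\<lambda>i. if i = k then X else 1\<^sub>m n)"
proof (rule eq_matI)
  fix a b assume "a < dim_row (tens n m (\<lambda>i. if i = k then X else 1\<^sub>m n))" "b < dim_col (tens n m (\<lambda>i. if i = k then X else 1\<^sub>m n))"
  then have a: "a < n^m" and b: "b < n^m" by auto
  have "n > 0" 
  proof (rule ccontr)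
    assume "\<not> n > 0" then have "n = 0" by simp
    with a k show False by (simp add: power_0_left split: if_splits)
  qed
  note dl = digit_lt[OF this]
  have eq: "(\<lambda>i. if i = k then X else 1\<^sub>m n) = (\<lambda>_. 1\<^sub>m n)(k := X)" by auto
  have "tens n m (\<lambda>i. if i = k then X else 1\<^sub>m n) $$ (a,b) =
     X $$ (digit n m a k, digit n m b k) * (\<Prod>i\<in>{1..m}-{k}. (1\<^sub>m n :: complex mat) $$ (digit n m a i, digit n m b i))"
    unfolding tens_index[OF a b] eq prod_upd_split[OF k] ..
  also have "(\<Prod>i\<in>{1..m}-{k}. (1\<^sub>m n :: complex mat) $$ (digit n m a i, digit n m b i))
     = (\<Prod>i\<in>{1..m}-{k}. if digit n m a i = digit n m b i then 1 else 0)"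
    using dl by (intro prod.cong) auto
  also have "\<dots> = (if \<forall>i\<in>{1..m}-{k}. digit n m a i = digit n m b i then 1 else 0)"
    by (auto intro: prod_zero)
  finally show "embed_op n m k X $$ (a,b) = tens n m (\<lambda>i. if i = k then X else 1\<^sub>m n) $$ (a,b)"
    using a b by (simp add: embed_op_def)
qed (auto simp: embed_op_def)

lemma tensor_pow_tens: "tensor_pow n m X = tens n m (\<lambda>_. X)"
  by (simp add: tensor_pow_def tens_def)

lemma quad_nonneg_zero:
  fixes a b :: real
  assumes "\<And>x. a * x + b * x\<^sup>2 \<ge> 0"
  shows "a = 0"
proof (rule ccontr)
  assume a: "a \<noteq> 0"
  define c where "c = \<bar>b\<bar> + 1"
  have c: "c > 0" "b < c" unfolding c_def by auto
  have "a * (-a/c) + b * (-a/c)\<^sup>2 = a\<^sup>2 / c\<^sup>2 * (b - c)"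
    using c by (simp add: field_simps power2_eq_square)
  also have "\<dots> < 0" using a c by (intro mult_pos_neg) auto
  finally show False using assms[of "-a/c"] by simp
qed

lemma cinner_rho:
  assumes "x \<in> carrier_vec N" "y \<in> carrier_vec N" "\<rho> \<in> carrier_mat N N"
  shows "cinner x (\<rho> *\<^sub>v y) = (\<Sum>i<N. \<Sum>a<N. cnj (x$i) * \<rho>$$(i,a) * y$a)"
  using assms unfolding cinner_def
  by (auto simp: scalar_prod_def lessThan_atLeast0 sum_distrib_left mult.assoc intro!: sum.cong)

lemma psd_kill:
  assumes psd: "positive_semidef N \<rho>" and v: "v \<in> carrier_vec N" and w: "w \<in> carrier_vec N"
    and z: "cinner v (\<rho> *\<^sub>v v) = 0"
  shows "cinner w (\<rho> *\<^sub>v v) = 0 \<and> cinner v (\<rho> *\<^sub>v w) = 0"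
proof -
  have r: "\<rho> \<in> carrier_mat N N" using psd by (simp add: positive_semidef_def)
  define S where "S = (\<lambda>x y. \<Sum>i<N. \<Sum>a<N. cnj (x$i) * \<rho>$$(i,a) * y$a)"
  define \<alpha> where "\<alpha> = S v w"
  define \<beta> where "\<beta> = S w v"
  define \<gamma> where "\<gamma> = S w w"
  have Svv: "S v v = 0" using z cinner_rho[OF v v r] by (simp add: S_def)
  have key: "Im (t * \<alpha> + cnj t * \<beta> + cnj t * t * \<gamma>) = 0 \<and> 0 \<le> Re (t * \<alpha> + cnj t * \<beta> + cnj t * t * \<gamma>)" for t
  proof -
    define u where "u = vec N (\<lambda>i. v$i + t * w$i)"
    have u: "u \<in> carrier_vec N" by (simp add: u_def)
    have "cinner u (\<rho> *\<^sub>v u) = S u u" using cinner_rho[OF u u r] by (simp add: S_def)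
    also have "S u u = S v v + t * S v w + cnj t * S w v + cnj t * t * S w w"
      unfolding S_def u_def
      by (simp add: sum.distrib sum_distrib_left algebra_simps)
    finally have "cinner u (\<rho> *\<^sub>v u) = t * \<alpha> + cnj t * \<beta> + cnj t * t * \<gamma>"
      using Svv by (simp add: \<alpha>_def \<beta>_def \<gamma>_def)
    then show ?thesis using psd u by (auto simp: positive_semidef_def)
  qed
  have g: "Im \<gamma> = 0" using key[of 1] key[of "-1"] by simp
  have p1: "Re (\<alpha> + \<beta>) = 0"
  proof (rule quad_nonneg_zero[where b = "Re \<gamma>"])
    fix x :: real show "0 \<le> Re (\<alpha> + \<beta>) * x + Re \<gamma> * x\<^sup>2"
      using key[of "complex_of_real x"] by (simp add: power2_eq_square algebra_simps)
  qed
  have p2: "Im (\<alpha> + \<beta>) = 0" using key[of 1] g by simp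
  have p3: "Im (\<alpha> - \<beta>) = 0"
  proof -
    have "- Im (\<alpha> - \<beta>) = 0"
    proof (rule quad_nonneg_zero[where b = "Re \<gamma>"])
      fix x :: real show "0 \<le> - Im (\<alpha> - \<beta>) * x + Re \<gamma> * x\<^sup>2"
        using key[of "\<i> * complex_of_real x"] by (simp add: power2_eq_square algebra_simps)
    qed
    then show ?thesis by simp
  qed
  have p4: "Re (\<alpha> - \<beta>) = 0" using key[of "\<i>"] g by (simp add: algebra_simps)
  have "\<alpha> = 0" "\<beta> = 0" using p1 p2 p3 p4 by (auto simp: complex_eq_iff)
  then show ?thesis using cinner_rho[OF w v r] cinner_rho[OF v w r] by (simp add: S_def \<alpha>_def \<beta>_def)
qed

lemma mat_sum_carrier[simp]: "mat_sum N f J \<in> carrier_mat N N"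
  by (simp add: mat_sum_def)

lemma mat_sum_dims[simp]: "dim_row (mat_sum N f J) = N" "dim_col (mat_sum N f J) = N"
  by (simp_all add: mat_sum_def)

lemma mat_sum_index: "a < N \<Longrightarrow> b < N \<Longrightarrow> mat_sum N f J $$ (a,b) = (\<Sum>j\<in>J. f j $$ (a,b))"
  by (simp add: mat_sum_def)

lemma mat_sum_cong: "(\<And>j. j \<in> J \<Longrightarrow> f j = g j) \<Longrightarrow> mat_sum N f J = mat_sum N g J"
  unfolding mat_sum_def by (intro eq_matI) auto

lemma mat_sum_mult_right:
  assumes "\<And>j. j \<in> J \<Longrightarrow> f j \<in> carrier_mat N N" "B \<in> carrier_mat N N"
  shows "mat_sum N f J * B = mat_sum N (\<lambda>j. f j * B) J"
proof (rule eq_matI)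
  fix a c assume "a < dim_row (mat_sum N (\<lambda>j. f j * B) J)" "c < dim_col (mat_sum N (\<lambda>j. f j * B) J)"
  then have a: "a < N" and c: "c < N" by auto
  have fc: "\<And>j. j \<in> J \<Longrightarrow> dim_row (f j) = N" "\<And>j. j \<in> J \<Longrightarrow> dim_col (f j) = N" using assms(1) by auto
  have "(mat_sum N f J * B) $$ (a,c) = (\<Sum>b<N. (\<Sum>j\<in>J. f j $$ (a,b)) * B $$ (b,c))"
    using a c assms by (simp add: scalar_prod_def lessThan_atLeast0 mat_sum_index)
  also have "\<dots> = (\<Sum>j\<in>J. \<Sum>b<N. f j $$ (a,b) * B $$ (b,c))"
    by (simp add: sum_distrib_right sum.swap[of _ J])
  also have "\<dots> = mat_sum N (\<lambda>j. f j * B) J $$ (a,c)"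
    using a c assms(2) fc by (auto simp: scalar_prod_def lessThan_atLeast0 mat_sum_index intro!: sum.cong)
  finally show "(mat_sum N f J * B) $$ (a,c) = mat_sum N (\<lambda>j. f j * B) J $$ (a,c)" .
qed (use assms in auto)

lemma mat_sum_mult_left:
  assumes "\<And>j. j \<in> J \<Longrightarrow> f j \<in> carrier_mat N N" "A \<in> carrier_mat N N"
  shows "A * mat_sum N f J = mat_sum N (\<lambda>j. A * f j) J"
proof (rule eq_matI)
  fix a c assume "a < dim_row (mat_sum N (\<lambda>j. A * f j) J)" "c < dim_col (mat_sum N (\<lambda>j. A * f j) J)"
  then have a: "a < N" and c: "c < N" by auto
  have fc: "\<And>j. j \<in> J \<Longrightarrow> dim_row (f j) = N" "\<And>j. j \<in> J \<Longrightarrow> dim_col (f j) = N" using assms(1) by auto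
  have "(A * mat_sum N f J) $$ (a,c) = (\<Sum>b<N. A $$ (a,b) * (\<Sum>j\<in>J. f j $$ (b,c)))"
    using a c assms by (simp add: scalar_prod_def lessThan_atLeast0 mat_sum_index)
  also have "\<dots> = (\<Sum>j\<in>J. \<Sum>b<N. A $$ (a,b) * f j $$ (b,c))"
    by (simp add: sum_distrib_left sum.swap[of _ J])
  also have "\<dots> = mat_sum N (\<lambda>j. A * f j) J $$ (a,c)"
    using a c assms(2) fc by (auto simp: scalar_prod_def lessThan_atLeast0 mat_sum_index intro!: sum.cong)
  finally show "(A * mat_sum N f J) $$ (a,c) = mat_sum N (\<lambda>j. A * f j) J $$ (a,c)" .
qed (use assms in auto)

lemma mtrace_mat_sum:
  assumes "\<And>j. j \<in> J \<Longrightarrow> f j \<in> carrier_mat N N"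
  shows "mtrace (mat_sum N f J) = (\<Sum>j\<in>J. mtrace (f j))"
proof -
  have "mtrace (mat_sum N f J) = (\<Sum>i<N. \<Sum>j\<in>J. f j $$ (i,i))"
    by (simp add: mtrace_def mat_sum_index)
  also have "\<dots> = (\<Sum>j\<in>J. \<Sum>i<N. f j $$ (i,i))" by (rule sum.swap)
  also have "\<dots> = (\<Sum>j\<in>J. mtrace (f j))" using assms by (auto simp: mtrace_def intro!: sum.cong)
  finally show ?thesis .
qed

lemma mat_sum_delta:
  assumes "finite J" "i \<in> J" "A \<in> carrier_mat N N"
  shows "mat_sum N (\<lambda>j. if j = i then A else 0\<^sub>m N N) J = A"
  using assms unfolding mat_sum_def
  by (intro eq_matI) (auto simp: if_distrib[of "\<lambda>X. X $$ _"] cong: if_cong)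

lemma adj_mat_sum:
  assumes "\<And>j. j \<in> J \<Longrightarrow> f j \<in> carrier_mat N N"
  shows "adj (mat_sum N f J) = mat_sum N (\<lambda>j. adj (f j)) J"
proof -
  have fc: "\<And>j. j \<in> J \<Longrightarrow> dim_row (f j) = N" "\<And>j. j \<in> J \<Longrightarrow> dim_col (f j) = N" using assms(1) by auto
  show ?thesis using fc unfolding mat_sum_def
  by (intro eq_matI) (auto simp: adj_index intro!: sum.cong)
qed

lemma mtrace_minus:
  assumes "A \<in> carrier_mat N N" "B \<in> carrier_mat N N"
  shows "mtrace (A - B) = mtrace A - mtrace B"
  using assms by (simp add: mtrace_def sum_subtractf)

lemma mtrace_comm:
  assumes "A \<in> carrier_mat N N" "B \<in> carrier_mat N N"
  shows "mtrace (A * B) = mtrace (B * A)"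
proof -
  have "mtrace (A * B) = (\<Sum>i<N. \<Sum>j<N. A $$ (i,j) * B $$ (j,i))"
    using assms by (simp add: mtrace_def scalar_prod_def lessThan_atLeast0)
  also have "\<dots> = (\<Sum>j<N. \<Sum>i<N. B $$ (j,i) * A $$ (i,j))"
    by (subst sum.swap) (simp add: mult.commute)
  also have "\<dots> = mtrace (B * A)"
    using assms by (simp add: mtrace_def scalar_prod_def lessThan_atLeast0)
  finally show ?thesis .
qed

lemma adj_minus:
  assumes "A \<in> carrier_mat N N" "B \<in> carrier_mat N N"
  shows "adj (A - B) = adj A - adj B"
  using assms by (intro eq_matI) (auto simp: adj_index)

lemma adj_one: "adj (1\<^sub>m N) = 1\<^sub>m N"
  by (intro eq_matI) (auto simp: adj_index)

lemma cinner_unit: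
  assumes "i < N" "y \<in> carrier_vec N"
  shows "cinner (unit_vec N i) y = y $ i"
proof -
  have "cinner (unit_vec N i) y = (\<Sum>k<N. cnj ((unit_vec N i :: complex vec) $ k) * y $ k)"
    by (simp add: cinner_def)
  also have "\<dots> = (\<Sum>k<N. if k = i then y $ k else 0)"
    by (rule sum.cong) (use assms(1) in auto)
  also have "\<dots> = y $ i" using assms by (simp add: sum.delta)
  finally show ?thesis .
qed

lemma proj_kill:
  assumes psd: "positive_semidef N \<rho>" and R: "R \<in> carrier_mat N N" and h: "adj R = R"
    and idem: "R * R = R" and tr: "mtrace (R * \<rho>) = 0"
  shows "R * \<rho> = 0\<^sub>m N N \<and> \<rho> * R = 0\<^sub>m N N"
proof -
  have r: "\<rho> \<in> carrier_mat N N" using psd by (simp add: positive_semidef_def)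
  have herm: "R $$ (a,b) = cnj (R $$ (b,a))" if "a < N" "b < N" for a b
  proof -
    have "R $$ (a,b) = adj R $$ (a,b)" using h by simp
    also have "\<dots> = cnj (R $$ (b,a))" using that R by (simp add: adj_index)
    finally show ?thesis .
  qed
  have colc: "col R b \<in> carrier_vec N" for b using R by auto
  have q: "cinner (col R b) (\<rho> *\<^sub>v col R b) = (R * \<rho> * R) $$ (b,b)" if b: "b < N" for b
  proof -
    have "cinner (col R b) (\<rho> *\<^sub>v col R b) = (\<Sum>i<N. \<Sum>a<N. cnj (R $$ (i,b)) * \<rho>$$(i,a) * R $$ (a,b))"
      using cinner_rho[OF colc colc r] R b by simp
    also have "\<dots> = (\<Sum>i<N. \<Sum>a<N. R $$ (b,i) * \<rho>$$(i,a) * R $$ (a,b))"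
      using b by (intro sum.cong refl) (simp add: herm[of b])
    also have "\<dots> = (R * (\<rho> * R)) $$ (b,b)"
      using R r b by (simp add: scalar_prod_def lessThan_atLeast0 sum_distrib_left mult.assoc)
    also have "\<dots> = (R * \<rho> * R) $$ (b,b)"
      using assoc_mult_mat[of R N N \<rho> N R N] R r by simp
    finally show ?thesis .
  qed
  have "mtrace (R * \<rho>) = mtrace ((R * R) * \<rho>)" using idem by simp
  also have "\<dots> = mtrace (R * (R * \<rho>))" using R r by (simp add: assoc_mult_mat[of R N N R N \<rho> N])
  also have "\<dots> = mtrace ((R * \<rho>) * R)" using R r by (intro mtrace_comm[of _ N]) auto
  finally have "(\<Sum>b<N. (R * \<rho> * R) $$ (b,b)) = 0" using tr R r by (simp add: mtrace_def)
  then have s0: "(\<Sum>b<N. cinner (col R b) (\<rho> *\<^sub>v col R b)) = 0" using q by simp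
  have im: "Im (cinner (col R b) (\<rho> *\<^sub>v col R b)) = 0" and re: "Re (cinner (col R b) (\<rho> *\<^sub>v col R b)) \<ge> 0" for b
    using psd colc[of b] by (auto simp: positive_semidef_def)
  have "(\<Sum>b<N. Re (cinner (col R b) (\<rho> *\<^sub>v col R b))) = 0"
    using arg_cong[OF s0, of Re] by (simp add: Re_sum)
  then have "\<forall>b\<in>{..<N}. Re (cinner (col R b) (\<rho> *\<^sub>v col R b)) = 0"
    using re by (subst sum_nonneg_eq_0_iff[symmetric]) auto
  then have z: "cinner (col R b) (\<rho> *\<^sub>v col R b) = 0" if "b < N" for b
    using im[of b] that by (simp add: complex_eq_iff)
  have k1: "cinner w (\<rho> *\<^sub>v col R b) = 0" "cinner (col R b) (\<rho> *\<^sub>v w) = 0"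
    if "b < N" "w \<in> carrier_vec N" for b w
    using psd_kill[OF psd colc that(2) z[OF that(1)]] by auto
  have "R * \<rho> = 0\<^sub>m N N"
  proof (rule eq_matI)
    fix b c assume "b < dim_row (0\<^sub>m N N :: complex mat)" "c < dim_col (0\<^sub>m N N :: complex mat)"
    then have b: "b < N" and c: "c < N" by auto
    have "(R * \<rho>) $$ (b,c) = (\<Sum>i<N. R $$ (b,i) * \<rho> $$ (i,c))"
      using R r b c by (simp add: scalar_prod_def lessThan_atLeast0)
    also have "\<dots> = cinner (col R b) (\<rho> *\<^sub>v unit_vec N c)"
      unfolding cinner_def using R r b c by (intro sum.cong) (auto simp: herm[of b])
    also have "\<dots> = 0" using k1(2)[OF b, of "unit_vec N c"] by simp
    finally show "(R * \<rho>) $$ (b,c) = 0\<^sub>m N N $$ (b,c)" using b c by simp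
  qed (use R r in auto)
  moreover have "\<rho> * R = 0\<^sub>m N N"
  proof (rule eq_matI)
    fix i b assume "i < dim_row (0\<^sub>m N N :: complex mat)" "b < dim_col (0\<^sub>m N N :: complex mat)"
    then have i: "i < N" and b: "b < N" by auto
    have "(\<rho> * R) $$ (i,b) = (\<rho> *\<^sub>v col R b) $ i" using R r i b by simp
    also have "\<dots> = cinner (unit_vec N i) (\<rho> *\<^sub>v col R b)"
      by (subst cinner_unit[of i N]) (use i r R in auto)
    also have "\<dots> = 0" using k1(1)[OF b, of "unit_vec N i"] i by simp
    finally show "(\<rho> * R) $$ (i,b) = 0\<^sub>m N N $$ (i,b)" using i b by simp
  qed (use R r in auto)
  ultimately show ?thesis by simp
qed



lemma mat_eq_of_minus_zero:
  fixes A B :: "complex mat"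
  assumes "A \<in> carrier_mat N N" "B \<in> carrier_mat N N" "A - B = 0\<^sub>m N N"
  shows "A = B"
proof (rule eq_matI)
  fix i j assume "i < dim_row B" "j < dim_col B"
  then have ij: "i < N" "j < N" using assms by auto
  have "(A - B) $$ (i,j) = 0" using assms(3) ij by simp
  moreover have "(A - B) $$ (i,j) = A $$ (i,j) - B $$ (i,j)" using assms ij by (intro index_minus_mat) auto
  ultimately show "A $$ (i,j) = B $$ (i,j)" by simp
qed (use assms in auto)

lemma proj_compl:
  fixes P :: "complex mat"
  assumes P: "P \<in> carrier_mat d d" and idem: "P * P = P"
  shows "(1\<^sub>m d - P) * (1\<^sub>m d - P) = 1\<^sub>m d - P"
proof -
  have "(1\<^sub>m d - P) * (1\<^sub>m d - P) = 1\<^sub>m d * (1\<^sub>m d - P) - P * (1\<^sub>m d - P)"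
    using P by (intro minus_mult_distrib_mat[of _ d d]) auto
  also have "P * (1\<^sub>m d - P) = P * 1\<^sub>m d - P * P"
    using P by (intro mult_minus_distrib_mat[of _ d d]) auto
  also have "\<dots> = P - P" using P idem by simp
  finally have e: "(1\<^sub>m d - P) * (1\<^sub>m d - P) = (1\<^sub>m d - P) - (P - P)" using P by simp
  show ?thesis unfolding e using P by (intro eq_matI) auto
qed

lemma dir2:
  assumes psd: "positive_semidef N \<rho>" and tr1: "mtrace \<rho> = 1"
    and Pc: "Q \<in> carrier_mat N N" and h: "adj Q = Q" and idem: "Q * Q = Q"
  shows "(mtrace (Q * \<rho>) = 1 \<longrightarrow> Q * \<rho> = \<rho> \<and> \<rho> * Q = \<rho>)"
    and "(mtrace (Q * \<rho>) = 1 \<longleftrightarrow> (Q * \<rho> * Q = Q * \<rho> \<and> Q * \<rho> = \<rho>))"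
proof -
  have r: "\<rho> \<in> carrier_mat N N" using psd by (simp add: positive_semidef_def)
  define R where "R = 1\<^sub>m N - Q"
  have Rc: "R \<in> carrier_mat N N" using Pc by (simp add: R_def minus_carrier_mat)
  have Rh: "adj R = R" unfolding R_def using Pc h by (subst adj_minus[of _ N]) (auto simp: adj_one)
  have Ri: "R * R = R" unfolding R_def by (rule proj_compl[OF Pc idem])
  have Rr: "R * \<rho> = \<rho> - Q * \<rho>"
    unfolding R_def using Pc r by (subst minus_mult_distrib_mat[of _ N N]) auto
  have rR: "\<rho> * R = \<rho> - \<rho> * Q"
    unfolding R_def using Pc r by (subst mult_minus_distrib_mat[of _ N N]) auto
  show 1: "mtrace (Q * \<rho>) = 1 \<longrightarrow> Q * \<rho> = \<rho> \<and> \<rho> * Q = \<rho>"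
  proof
    assume t: "mtrace (Q * \<rho>) = 1"
    have "mtrace (R * \<rho>) = 0" unfolding Rr using t tr1 Pc r by (simp add: mtrace_minus[of _ N])
    from proj_kill[OF psd Rc Rh Ri this] have "\<rho> - Q * \<rho> = 0\<^sub>m N N" "\<rho> - \<rho> * Q = 0\<^sub>m N N"
      using Rr rR by auto
    then show "Q * \<rho> = \<rho> \<and> \<rho> * Q = \<rho>"
      using mat_eq_of_minus_zero[of \<rho> N "Q * \<rho>"] mat_eq_of_minus_zero[of \<rho> N "\<rho> * Q"] Pc r by auto
  qed
  show "mtrace (Q * \<rho>) = 1 \<longleftrightarrow> (Q * \<rho> * Q = Q * \<rho> \<and> Q * \<rho> = \<rho>)"
  proof
    assume t: "mtrace (Q * \<rho>) = 1"
    with 1 have e: "Q * \<rho> = \<rho>" "\<rho> * Q = \<rho>" by auto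
    have "Q * \<rho> * Q = Q * (\<rho> * Q)" using Pc r by (intro assoc_mult_mat[of _ N N _ N _ N]) auto
    then show "Q * \<rho> * Q = Q * \<rho> \<and> Q * \<rho> = \<rho>" using e by simp
  next
    assume "Q * \<rho> * Q = Q * \<rho> \<and> Q * \<rho> = \<rho>"
    then show "mtrace (Q * \<rho>) = 1" using tr1 by simp
  qed
qed



lemma embed_carrier[simp]: "embed_op n m k X \<in> carrier_mat (n^m) (n^m)"
  by (simp add: embed_op_def)

lemma tensor_pow_carrier[simp]: "tensor_pow n m X \<in> carrier_mat (n^m) (n^m)"
  by (simp add: tensor_pow_def)

theorem proposition4:
  fixes n m :: nat and \<sigma> \<rho> :: "complex mat" and J :: "'j set"
    and s :: "'j \<Rightarrow> real" and P :: "'j \<Rightarrow> complex mat"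
  assumes "n \<ge> 2" and "m \<ge> 2"
    and "self_adjoint n \<sigma>"
    and "spectral_decomp n \<sigma> J s P"
    and "density_op (n ^ m) \<rho>"
  shows "(sigma_SMC n m J P \<rho> \<longleftrightarrow> mtrace (Pi_sym n m J P * \<rho>) = 1)
       \<and> (mtrace (Pi_sym n m J P * \<rho>) = 1 \<longleftrightarrow>
            (Pi_sym n m J P * \<rho> * Pi_sym n m J P = Pi_sym n m J P * \<rho>
             \<and> Pi_sym n m J P * \<rho> = \<rho>))"
proof -
  have n0: "n > 0" using assms(1) by simp
  have m1: "1 \<in> {1..m}" using assms(2) by simp
  have finJ: "finite J" and orth: "\<And>j. j \<in> J \<Longrightarrow> orth_projector n (P j)"
    and ortho: "\<And>j k. j \<in> J \<Longrightarrow> k \<in> J \<Longrightarrow> j \<noteq> k \<Longrightarrow> P j * P k = 0\<^sub>m n n"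
    and sum1: "mat_sum n P J = 1\<^sub>m n"
    using assms(4) unfolding spectral_decomp_def by auto
  have Pc: "\<And>j. j \<in> J \<Longrightarrow> P j \<in> carrier_mat n n"
    and Pi: "\<And>j. j \<in> J \<Longrightarrow> P j * P j = P j"
    and Ph: "\<And>j. j \<in> J \<Longrightarrow> adj (P j) = P j"
    using orth unfolding orth_projector_def by auto
  have psd: "positive_semidef (n^m) \<rho>" and tr1: "mtrace \<rho> = 1"
    using assms(5) unfolding density_op_def by auto
  have rc: "\<rho> \<in> carrier_mat (n^m) (n^m)" using psd by (simp add: positive_semidef_def)
  define T where "T = (\<lambda>j. tensor_pow n m (P j))"
  define E where "E = (\<lambda>k j. embed_op n m k (P j))"
  define Q where "Q = Pi_sym n m J P"
  have Qdef: "Q = mat_sum (n^m) T J" by (simp add: Q_def Pi_sym_def T_def)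
  have Tt: "T j = tens n m (\<lambda>_. P j)" for j by (simp add: T_def tensor_pow_tens)
  have Et: "E k j = tens n m (\<lambda>i. if i = k then P j else 1\<^sub>m n)" if "k \<in> {1..m}" for k j
    using embed_tens[OF that] by (simp add: E_def)
  have Tc: "T j \<in> carrier_mat (n^m) (n^m)" for j by (simp add: T_def)
  have Ec: "E k j \<in> carrier_mat (n^m) (n^m)" for k j by (simp add: E_def)
  have Qc: "Q \<in> carrier_mat (n^m) (n^m)" by (simp add: Qdef)
  have EEc: "E k j * E l j \<in> carrier_mat (n^m) (n^m)" for k l j by (rule mult_carrier_mat[OF Ec Ec])
  have Erc: "E l j * \<rho> \<in> carrier_mat (n^m) (n^m)" for l j by (rule mult_carrier_mat[OF Ec rc])
  have EErc: "E k j * E l j * \<rho> \<in> carrier_mat (n^m) (n^m)" for k l j by (rule mult_carrier_mat[OF EEc rc])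
  have TT: "T i * T j = (if j = i then T i else 0\<^sub>m (n^m) (n^m))" if "i \<in> J" "j \<in> J" for i j
  proof -
    have "T i * T j = tens n m (\<lambda>_. P i * P j)"
      unfolding Tt using that by (intro tens_mult[OF n0]) (auto intro: Pc)
    also have "\<dots> = (if j = i then T i else 0\<^sub>m (n^m) (n^m))"
    proof (cases "j = i")
      case True then show ?thesis using Pi[OF that(1)] by (simp add: Tt)
    next
      case False then show ?thesis
        using tens_zero[OF n0 m1, of "\<lambda>_. P i * P j"] ortho[OF that(1,2)] by auto
    qed
    finally show ?thesis .
  qed
  have QQ: "Q * Q = Q"
  proof -
    have "Q * Q = mat_sum (n^m) (\<lambda>i. T i * Q) J"
      unfolding Qdef by (rule mat_sum_mult_right; simp add: Tc)
    also have "\<dots> = mat_sum (n^m) T J"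
    proof (rule mat_sum_cong)
      fix i assume i: "i \<in> J"
      have "T i * Q = mat_sum (n^m) (\<lambda>j. T i * T j) J"
        unfolding Qdef by (rule mat_sum_mult_left; simp add: Tc)
      also have "\<dots> = mat_sum (n^m) (\<lambda>j. if j = i then T i else 0\<^sub>m (n^m) (n^m)) J"
        using TT i by (intro mat_sum_cong) auto
      also have "\<dots> = T i" by (rule mat_sum_delta[OF finJ i Tc])
      finally show "T i * Q = T i" .
    qed
    finally show ?thesis by (simp add: Qdef)
  qed
  have Qh: "adj Q = Q"
  proof -
    have "adj Q = mat_sum (n^m) (\<lambda>j. adj (T j)) J" unfolding Qdef by (rule adj_mat_sum) (simp add: Tc)
    also have "\<dots> = mat_sum (n^m) T J"
      by (intro mat_sum_cong) (simp add: Tt tens_adj[OF n0] Pc Ph)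
    finally show ?thesis by (simp add: Qdef)
  qed
  note D2 = dir2[OF psd tr1 Qc Qh QQ]
  have ET: "E k j * T i = (if i = j then T j else 0\<^sub>m (n^m) (n^m))"
    if k: "k \<in> {1..m}" and "i \<in> J" "j \<in> J" for k i j
  proof -
    have "E k j * T i = tens n m (\<lambda>l. (if l = k then P j else 1\<^sub>m n) * P i)"
      unfolding Et[OF k] Tt using that by (intro tens_mult[OF n0]) (auto intro: Pc)
    also have "\<dots> = (if i = j then T j else 0\<^sub>m (n^m) (n^m))"
    proof (cases "i = j")
      case True
      have "tens n m (\<lambda>l. (if l = k then P j else 1\<^sub>m n) * P i) = tens n m (\<lambda>_. P j)"
        using True Pi[OF that(3)] Pc[OF that(3)] by (intro tens_cong) auto
      then show ?thesis using True by (simp add: Tt)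
    next
      case False then show ?thesis
        using tens_zero[OF n0 k, of "\<lambda>l. (if l = k then P j else 1\<^sub>m n) * P i"] ortho[OF that(3,2)] by auto
    qed
    finally show ?thesis .
  qed
  have EQ: "E k j * Q = T j" if k: "k \<in> {1..m}" and j: "j \<in> J" for k j
  proof -
    have "E k j * Q = mat_sum (n^m) (\<lambda>i. E k j * T i) J"
      unfolding Qdef by (rule mat_sum_mult_left; simp add: Tc Ec)
    also have "\<dots> = mat_sum (n^m) (\<lambda>i. if i = j then T j else 0\<^sub>m (n^m) (n^m)) J"
      using ET[OF k _ j] by (intro mat_sum_cong) auto
    also have "\<dots> = T j" by (rule mat_sum_delta[OF finJ j Tc])
    finally show ?thesis .
  qed
  have ETj: "E k j * T j = T j" if "k \<in> {1..m}" "j \<in> J" for k j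
    using ET[OF that(1) that(2) that(2)] by simp
  have sumE: "mat_sum (n^m) (\<lambda>j. E l j) J = 1\<^sub>m (n^m)" if l: "l \<in> {1..m}" for l
  proof -
    have "mat_sum (n^m) (\<lambda>j. E l j) J = embed_op n m l (1\<^sub>m n)"
    proof (rule eq_matI)
      fix a b assume "a < dim_row (embed_op n m l (1\<^sub>m n))" "b < dim_col (embed_op n m l (1\<^sub>m n))"
      then have a: "a < n^m" and b: "b < n^m" by (auto simp: embed_op_def)
      have dl: "digit n m a l < n" "digit n m b l < n" using digit_lt[OF n0] by auto
      have "(\<Sum>j\<in>J. P j $$ (digit n m a l, digit n m b l)) = mat_sum n P J $$ (digit n m a l, digit n m b l)"
        using dl by (simp add: mat_sum_index)
      also have "\<dots> = 1\<^sub>m n $$ (digit n m a l, digit n m b l)" using sum1 by simp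
      finally have s: "(\<Sum>j\<in>J. P j $$ (digit n m a l, digit n m b l)) = 1\<^sub>m n $$ (digit n m a l, digit n m b l)" .
      show "mat_sum (n^m) (\<lambda>j. E l j) J $$ (a,b) = embed_op n m l (1\<^sub>m n) $$ (a,b)"
        using a b s by (simp add: mat_sum_index E_def embed_op_def sum_distrib_right[symmetric])
    qed (auto simp: embed_op_def)
    also have "\<dots> = tens n m (\<lambda>_. 1\<^sub>m n)" using embed_tens[OF l, of n "1\<^sub>m n"] by simp
    also have "\<dots> = 1\<^sub>m (n^m)" by (rule tens_one[OF n0])
    finally show ?thesis .
  qed
  have smc_imp: "mtrace (Q * \<rho>) = 1" if smc: "sigma_SMC n m J P \<rho>"
  proof -
    have step: "E l j * \<rho> = E k j * (E l j * \<rho>)" if k: "k \<in> {1..m}" and l: "l \<in> {1..m}" and j: "j \<in> J" for k l j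
    proof -
      define Z0 where "Z0 = (\<lambda>i. if i = l then P j else 1\<^sub>m n)"
      define Z where "Z = Z0(k := 1\<^sub>m n - P j)"
      have Z0c: "Z0 i \<in> carrier_mat n n" for i using Pc[OF j] by (simp add: Z0_def)
      have EE: "E k j * E l j = (if k = l then E l j else tens n m (Z0(k := P j)))"
      proof -
        have "E k j * E l j = tens n m (\<lambda>i. (if i = k then P j else 1\<^sub>m n) * Z0 i)"
          unfolding Et[OF k] Et[OF l] Z0_def using Pc[OF j] by (intro tens_mult[OF n0]) auto
        also have "\<dots> = (if k = l then E l j else tens n m (Z0(k := P j)))"
          unfolding Et[OF l] using Pc[OF j] Pi[OF j] by (auto simp: Z0_def intro!: tens_cong)
        finally show ?thesis .
      qed
      show ?thesis
      proof (cases "k = l")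
        case True
        have "E k j * (E l j * \<rho>) = (E k j * E l j) * \<rho>"
          using Ec rc by (intro assoc_mult_mat[symmetric, of _ "n^m" "n^m" _ "n^m" _ "n^m"]) auto
        then show ?thesis using EE True by simp
      next
        case False
        have El: "E l j = tens n m (Z0(k := 1\<^sub>m n))"
          unfolding Et[OF l] Z0_def using False by (intro tens_cong) auto
        define R where "R = E l j - E k j * E l j"
        have "R = E l j - tens n m (Z0(k := P j))" unfolding R_def EE using False by simp
        also have "\<dots> = tens n m (Z0(k := 1\<^sub>m n)) - tens n m (Z0(k := P j))" using El by simp
        also have "\<dots> = tens n m Z" unfolding Z_def using Pc[OF j] by (intro tens_diff[OF n0 k]) auto
        finally have Rt: "R = tens n m Z" .
        have Zc: "Z i \<in> carrier_mat n n" for i using Pc[OF j] Z0c by (simp add: Z_def minus_carrier_mat)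
        have Zi: "Z i * Z i = Z i" for i
          using Pc[OF j] Pi[OF j] proj_compl[OF Pc[OF j] Pi[OF j]] by (auto simp: Z_def Z0_def)
        have Zh: "adj (Z i) = Z i" for i
          using Pc[OF j] Ph[OF j] by (auto simp: Z_def Z0_def adj_one adj_minus[of _ n])
        have Rc: "R \<in> carrier_mat (n^m) (n^m)" by (simp add: Rt)
        have Ri: "R * R = R" unfolding Rt using Zc by (subst tens_mult[OF n0]) (auto simp: Zi)
        have Rh: "adj R = R" unfolding Rt using Zc by (subst tens_adj[OF n0]) (auto simp: Zh)
        have Rr: "R * \<rho> = E l j * \<rho> - (E k j * E l j) * \<rho>"
          unfolding R_def using Ec rc mult_carrier_mat[OF Ec Ec] by (subst minus_mult_distrib_mat[of _ "n^m" "n^m"]) auto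
        have "mtrace (R * \<rho>) = mtrace (E l j * \<rho>) - mtrace (E k j * E l j * \<rho>)"
          unfolding Rr using Ec rc by (intro mtrace_minus[of _ "n^m"]) (simp_all add: EEc Erc EErc)
        also have "\<dots> = 0" using smc k l j by (simp add: sigma_SMC_def E_def)
        finally have z: "R * \<rho> = 0\<^sub>m (n^m) (n^m)" using proj_kill[OF psd Rc Rh Ri] by blast
        have "E l j * \<rho> = (E k j * E l j) * \<rho>"
          by (rule mat_eq_of_minus_zero[OF Erc EErc]) (use Rr z in simp)
        also have "\<dots> = E k j * (E l j * \<rho>)"
          using Ec rc by (intro assoc_mult_mat[of _ "n^m" "n^m" _ "n^m" _ "n^m"]) auto
        finally show ?thesis .
      qed
    qed
    have TE: "T j * \<rho> = E 1 j * \<rho>" if j: "j \<in> J" for j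
    proof -
      define F where "F = (\<lambda>r. tens n m (\<lambda>i. if i \<le> r then P j else 1\<^sub>m n))"
      have ind: "1 \<le> r \<longrightarrow> r \<le> m \<longrightarrow> F r * \<rho> = E 1 j * \<rho>" for r
      proof (induction r)
        case 0 then show ?case by simp
      next
        case (Suc r)
        show ?case
        proof (intro impI)
          assume r: "Suc r \<le> m"
          show "F (Suc r) * \<rho> = E 1 j * \<rho>"
          proof (cases "r = 0")
            case True
            have "F (Suc r) = E 1 j" unfolding F_def Et[OF m1] True by (intro tens_cong) auto
            then show ?thesis by simp
          next
            case False
            have sr: "Suc r \<in> {1..m}" using r by simp
            have "F (Suc r) = E (Suc r) j * F r"
              unfolding F_def Et[OF sr] using Pc[OF j] Pi[OF j]
              by (subst tens_mult[OF n0]) (auto intro!: tens_cong)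
            then have "F (Suc r) * \<rho> = (E (Suc r) j * F r) * \<rho>" by simp
            also have "\<dots> = E (Suc r) j * (F r * \<rho>)"
              by (rule assoc_mult_mat[OF Ec _ rc]) (simp add: F_def)
            also have "F r * \<rho> = E 1 j * \<rho>" using Suc False r by simp
            also have "E (Suc r) j * (E 1 j * \<rho>) = E 1 j * \<rho>" by (rule step[OF sr m1 j, symmetric])
            finally show ?thesis .
          qed
        qed
      qed
      have "T j = F m" unfolding F_def Tt by (intro tens_cong) auto
      then show ?thesis using ind[of m] assms(2) by simp
    qed
    have "Q * \<rho> = mat_sum (n^m) (\<lambda>j. T j * \<rho>) J"
      unfolding Qdef by (rule mat_sum_mult_right[OF Tc rc])
    also have "\<dots> = mat_sum (n^m) (\<lambda>j. E 1 j * \<rho>) J" by (rule mat_sum_cong) (rule TE)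
    also have "\<dots> = mat_sum (n^m) (\<lambda>j. E 1 j) J * \<rho>"
      by (rule mat_sum_mult_right[OF Ec rc, symmetric])
    also have "\<dots> = \<rho>" unfolding sumE[OF m1] by (rule left_mult_one_mat[OF rc])
    finally show ?thesis using tr1 by simp
  qed
  have tr_imp: "sigma_SMC n m J P \<rho>" if t: "mtrace (Q * \<rho>) = 1"
  proof -
    have Qr: "Q * \<rho> = \<rho>" using D2(1) t by auto
    show ?thesis unfolding sigma_SMC_def
    proof (intro ballI)
      fix j k l assume j: "j \<in> J" and k: "k \<in> {1..m}" and l: "l \<in> {1..m}"
      have a1: "E l j * \<rho> = T j * \<rho>"
      proof -
        have "E l j * \<rho> = E l j * (Q * \<rho>)" using Qr by simp
        also have "\<dots> = (E l j * Q) * \<rho>"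
          using Ec Qc rc by (intro assoc_mult_mat[symmetric, of _ "n^m" "n^m" _ "n^m" _ "n^m"]) auto
        finally show ?thesis using EQ[OF l j] by simp
      qed
      have "E k j * E l j * \<rho> = E k j * (E l j * \<rho>)"
        using Ec rc by (intro assoc_mult_mat[of _ "n^m" "n^m" _ "n^m" _ "n^m"]) auto
      also have "\<dots> = E k j * (T j * \<rho>)" using a1 by simp
      also have "\<dots> = (E k j * T j) * \<rho>"
        using Ec Tc rc by (intro assoc_mult_mat[symmetric, of _ "n^m" "n^m" _ "n^m" _ "n^m"]) auto
      also have "\<dots> = T j * \<rho>" using ETj[OF k j] by simp
      finally have "E k j * E l j * \<rho> = E l j * \<rho>" using a1 by simp
      then show "mtrace (embed_op n m k (P j) * embed_op n m l (P j) * \<rho>) = mtrace (embed_op n m l (P j) * \<rho>)"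
        by (simp add: E_def)
    qed
  qed
  show ?thesis using smc_imp tr_imp D2(2) unfolding Q_def by blast
qed

end
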